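(* Let $\mathcal{T}=(V,A,E,f,q)$ be a decorated tree and let $e=\{v,\alpha\}$ be an edge with $v\in V$ and $\alpha\in A\setminus A_0$. If $N_v=0$, then $q(e,v)$ divides $f(\alpha)$.
   Context: A graph is a pair $(X_0,X_1)$ of finite sets such that each element of $X_1$ (an edge) is a $2$-element subset of $X_0$; elements of $X_0$ are cells. A path is a tuple $(x_0,\dots,x_n)$ ($n\ge0$) of cells with $\{x_i,x_{i+1}\}$ an edge for each $i<n$, these edges pairwise distinct; a cell/edge is in the path if it is some $x_i$ / some $\{x_i,x_{i+1}\}$. The graph is a tree if any two cells $x,y$ are joined by a unique path $\gamma_{x,y}$. A decorated tree is $(V,A,E,f,q)$ with $V$ (vertices), $A$ (arrows) finite disjoint sets, $(V\cup A,E)$ a tree, every arrow contained in exactly one edge, $f:A\to\mathbb{Z}$, $q(e,x)\in\mathbb{Z}$ for each $e\in E$, $x\in e$, with $q(e,\alpha)=1$ for $\alpha\in A$, and for each $v\in V$ and distinct edges $e,e'\ni v$, $\gcd(q(e,v),q(e',v))=1$. $A_0=\{\alpha\in A:f(\alpha)=0\}$. An edge $\varepsilon$ is incident to a path $\gamma$ if it is not in $\gamma$ but contains a cell $u$ of $\gamma$; $q(\varepsilon,\gamma):=q(\varepsilon,u)$. For $v\ne\alpha$, $v\in V\cup A$, $\alpha\in A$: $x_{v,\alpha}=f(\alpha)\prod_\varepsilon q(\varepsilon,\gamma_{v,\alpha})$ over edges incident to $\gamma_{v,\alpha}$ (empty product $=1$). For $v\in V\cup A_0$, $N_v=\sum_{\alpha\in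 A\setminus A_0}x_{v,\alpha}$. *)

theory Defs
  imports Main
begin

definition is_graph :: "'a set \<Rightarrow> 'a set set \<Rightarrow> bool" where
  "is_graph X0 X1 \<longleftrightarrow> finite X0 \<and> finite X1 \<and> (\<forall>e\<in>X1. e \<subseteq> X0 \<and> card e = 2)"

definition path_edges :: "'a list \<Rightarrow> 'a set list" where
  "path_edges xs = map (\<lambda>i. {xs ! i, xs ! Suc i}) [0..<length xs - 1]"

definition is_path :: "'a set \<Rightarrow> 'a set set \<Rightarrow> 'a list \<Rightarrow> bool" where
  "is_path X0 X1 xs \<longleftrightarrow> xs \<noteq> [] \<and> set xs \<subseteq> X0 \<and>
     set (path_edges xs) \<subseteq> X1 \<and> distinct (path_edges xs)"

definition is_tree :: "'a set \<Rightarrow> 'a set set \<Rightarrow> bool" where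
  "is_tree X0 X1 \<longleftrightarrow> is_graph X0 X1 \<and>
     (\<forall>x\<in>X0. \<forall>y\<in>X0. \<exists>!p. is_path X0 X1 p \<and> hd p = x \<and> last p = y)"

definition gamma :: "'a set \<Rightarrow> 'a set set \<Rightarrow> 'a \<Rightarrow> 'a \<Rightarrow> 'a list" where
  "gamma X0 X1 x y = (THE p. is_path X0 X1 p \<and> hd p = x \<and> last p = y)"

definition decorated_tree ::
  "'a set \<Rightarrow> 'a set \<Rightarrow> 'a set set \<Rightarrow> ('a \<Rightarrow> int) \<Rightarrow> ('a set \<Rightarrow> 'a \<Rightarrow> int) \<Rightarrow> bool" where
  "decorated_tree V A E f q \<longleftrightarrow>
     finite V \<and> finite A \<and> V \<inter> A = {} \<and> is_tree (V \<union> A) E \<and>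
     (\<forall>\<alpha>\<in>A. card {e\<in>E. \<alpha> \<in> e} = 1) \<and>
     (\<forall>e\<in>E. \<forall>\<alpha>\<in>A. \<alpha> \<in> e \<longrightarrow> q e \<alpha> = 1) \<and>
     (\<forall>v\<in>V. \<forall>e\<in>E. \<forall>e'\<in>E. v \<in> e \<longrightarrow> v \<in> e' \<longrightarrow> e \<noteq> e' \<longrightarrow> gcd (q e v) (q e' v) = 1)"

definition A0 :: "'a set \<Rightarrow> ('a \<Rightarrow> int) \<Rightarrow> 'a set" where
  "A0 A f = {\<alpha>\<in>A. f \<alpha> = 0}"

definition incident_edges :: "'a set set \<Rightarrow> 'a list \<Rightarrow> 'a set set" where
  "incident_edges E \<gamma> = {\<epsilon>\<in>E. \<epsilon> \<notin> set (path_edges \<gamma>) \<and> \<epsilon> \<inter> set \<gamma> \<noteq> {}}"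

definition q_path :: "('a set \<Rightarrow> 'a \<Rightarrow> int) \<Rightarrow> 'a set \<Rightarrow> 'a list \<Rightarrow> int" where
  "q_path q \<epsilon> \<gamma> = q \<epsilon> (SOME u. u \<in> \<epsilon> \<and> u \<in> set \<gamma>)"

definition x_coef ::
  "'a set \<Rightarrow> 'a set \<Rightarrow> 'a set set \<Rightarrow> ('a \<Rightarrow> int) \<Rightarrow> ('a set \<Rightarrow> 'a \<Rightarrow> int) \<Rightarrow> 'a \<Rightarrow> 'a \<Rightarrow> int" where
  "x_coef V A E f q v \<alpha> =
     (let \<gamma> = gamma (V \<union> A) E v \<alpha> in f \<alpha> * (\<Prod>\<epsilon>\<in>incident_edges E \<gamma>. q_path q \<epsilon> \<gamma>))"

definition N_val ::
  "'a set \<Rightarrow> 'a set \<Rightarrow> 'a set set \<Rightarrow> ('a \<Rightarrow> int) \<Rightarrow> ('a set \<Rightarrow> 'a \<Rightarrow> int) \<Rightarrow> 'a \<Rightarrow> int" where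
  "N_val V A E f q v = (\<Sum>\<alpha>\<in>A - A0 A f. x_coef V A E f q v \<alpha>)"

end

theory Submission
  imports Defs
begin

lemma gamma_prop:
  assumes "is_tree X0 X1" "x \<in> X0" "y \<in> X0"
  shows "is_path X0 X1 (gamma X0 X1 x y) \<and> hd (gamma X0 X1 x y) = x \<and> last (gamma X0 X1 x y) = y"
proof -
  have "\<exists>!p. is_path X0 X1 p \<and> hd p = x \<and> last p = y" using assms unfolding is_tree_def by blast
  then show ?thesis unfolding gamma_def by (rule theI')
qed

lemma gamma_eq:
  assumes "is_tree X0 X1" "x \<in> X0" "y \<in> X0" "is_path X0 X1 p" "hd p = x" "last p = y"
  shows "gamma X0 X1 x y = p"
proof -
  have "\<exists>!p. is_path X0 X1 p \<and> hd p = x \<and> last p = y" using assms unfolding is_tree_def by blast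
  then show ?thesis unfolding gamma_def using assms by (intro the1_equality) auto
qed

lemma path_edges_nth:
  "i < length xs - 1 \<Longrightarrow> path_edges xs ! i = {xs ! i, xs ! Suc i}"
  "length (path_edges xs) = length xs - 1"
  by (auto simp: path_edges_def)

lemma leaf_not_in_path:
  assumes P: "is_path X0 X1 p" and h: "hd p = v" and l: "last p = b" and "b \<noteq> a" "v \<noteq> a"
    and leaf: "\<And>\<epsilon>. \<epsilon> \<in> X1 \<Longrightarrow> a \<in> \<epsilon> \<Longrightarrow> \<epsilon> = e"
  shows "a \<notin> set p"
proof
  assume "a \<in> set p"
  then obtain i where i: "i < length p" "p ! i = a" by (auto simp: in_set_conv_nth)
  have ne: "p \<noteq> []" using P by (simp add: is_path_def)
  have "i \<noteq> length p - 1" using i l ne \<open>b \<noteq> a\<close> by (auto simp: last_conv_nth)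
  hence il: "i < length p - 1" using i by simp
  have "i \<noteq> 0" using i h ne \<open>v \<noteq> a\<close> by (metis hd_conv_nth)
  then obtain j where j: "i = Suc j" by (cases i) auto
  have d: "distinct (path_edges p)" and s: "set (path_edges p) \<subseteq> X1" using P by (auto simp: is_path_def)
  have e1: "path_edges p ! i = {p ! i, p ! Suc i}" using il by (simp add: path_edges_nth)
  have e2: "path_edges p ! j = {p ! j, p ! Suc j}" using il j by (simp add: path_edges_nth)
  have m1: "path_edges p ! i \<in> X1" using s il by (metis nth_mem path_edges_nth(2) subsetD)
  have m2: "path_edges p ! j \<in> X1" using s il j by (metis Suc_lessD nth_mem path_edges_nth(2) subsetD)
  have "path_edges p ! i = e" using leaf[OF m1] e1 i by simp
  moreover have "path_edges p ! j = e" using leaf[OF m2] e2 i j by simp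
  ultimately show False using d il j nth_eq_iff_index_eq[OF d, of j i] by (simp add: path_edges_nth(2))
qed

lemma edge_in_path_sub:
  "\<epsilon> \<in> set (path_edges p) \<Longrightarrow> \<epsilon> \<subseteq> set p"
  by (auto simp: path_edges_def)

theorem lemma1p12:
  fixes V A :: "'a set" and E :: "'a set set" and f :: "'a \<Rightarrow> int"
    and q :: "'a set \<Rightarrow> 'a \<Rightarrow> int" and v \<alpha> :: 'a and e :: "'a set"
  assumes "decorated_tree V A E f q"
    and "e \<in> E" and "e = {v, \<alpha>}" and "v \<in> V" and "\<alpha> \<in> A - A0 A f"
    and "N_val V A E f q v = 0"
  shows "q e v dvd f \<alpha>"
proof -
  have D1: "finite V" "finite A" "V \<inter> A = {}" and tree: "is_tree (V \<union> A) E"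
    and Dc: "\<forall>\<alpha>\<in>A. card {e\<in>E. \<alpha> \<in> e} = 1"
    and Dg: "\<forall>v\<in>V. \<forall>e\<in>E. \<forall>e'\<in>E. v \<in> e \<longrightarrow> v \<in> e' \<longrightarrow> e \<noteq> e' \<longrightarrow> gcd (q e v) (q e' v) = 1"
    using assms(1) unfolding decorated_tree_def by blast+
  have finE: "finite E" using tree by (simp add: is_tree_def is_graph_def)
  have aA: "\<alpha> \<in> A" using assms(5) by simp
  have va: "v \<noteq> \<alpha>" using D1(3) assms(4) aA by blast
  have leaf: "\<epsilon> = e" if "\<epsilon> \<in> E" "\<alpha> \<in> \<epsilon>" for \<epsilon>
  proof -
    have "card {e\<in>E. \<alpha> \<in> e} = 1" using Dc aA by blast
    then obtain z where z: "{e\<in>E. \<alpha> \<in> e} = {z}" by (rule card_1_singletonE)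
    have "e \<in> {e\<in>E. \<alpha> \<in> e}" "\<epsilon> \<in> {e\<in>E. \<alpha> \<in> e}" using assms(2,3) that by auto
    then show ?thesis using z by auto
  qed
  let ?S = "A - A0 A f"
  have finS: "finite ?S" using D1 by auto
  have other: "q e v dvd x_coef V A E f q v \<beta>" if b: "\<beta> \<in> ?S - {\<alpha>}" for \<beta>
  proof -
    define \<gamma> where "\<gamma> = gamma (V \<union> A) E v \<beta>"
    have g: "is_path (V \<union> A) E \<gamma> \<and> hd \<gamma> = v \<and> last \<gamma> = \<beta>"
      unfolding \<gamma>_def using gamma_prop[OF tree] assms(4) b by auto
    have na: "\<alpha> \<notin> set \<gamma>"
      proof (rule leaf_not_in_path[of "V \<union> A" E \<gamma> v \<beta> \<alpha> e])
      show "\<beta> \<noteq> \<alpha>" using b by blast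
    qed (use g va leaf in blast)+
    have vin: "v \<in> set \<gamma>" using g by (metis hd_in_set is_path_def)
    have enp: "e \<notin> set (path_edges \<gamma>)" using edge_in_path_sub[of e \<gamma>] na assms(3) by auto
    have inc: "e \<in> incident_edges E \<gamma>" using enp vin assms(2,3) by (auto simp: incident_edges_def)
    have qp: "q_path q e \<gamma> = q e v"
    proof -
      have "(SOME u. u \<in> e \<and> u \<in> set \<gamma>) = v"
        by (rule some_equality) (use vin na assms(3) in auto)
      then show ?thesis by (simp add: q_path_def)
    qed
    have finI: "finite (incident_edges E \<gamma>)" using finE by (simp add: incident_edges_def)
    have "q e v dvd (\<Prod>\<epsilon>\<in>incident_edges E \<gamma>. q_path q \<epsilon> \<gamma>)"
      using dvd_prodI[OF finI inc, of "\<lambda>\<epsilon>. q_path q \<epsilon> \<gamma>"] qp by simp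
    then show ?thesis unfolding x_coef_def Let_def \<gamma>_def[symmetric] by simp
  qed
  define \<gamma> where "\<gamma> = [v, \<alpha>]"
  have pe: "path_edges \<gamma> = [e]" using assms(3) by (simp add: \<gamma>_def path_edges_def)
  have pth: "is_path (V \<union> A) E \<gamma>" using pe assms(2,4) aA unfolding is_path_def \<gamma>_def by simp
  have gg: "gamma (V \<union> A) E v \<alpha> = \<gamma>"
    by (rule gamma_eq[OF tree]) (use assms(4) aA pth in \<open>auto simp: \<gamma>_def\<close>)
  have cop: "coprime (q e v) (q_path q \<epsilon> \<gamma>)" if "\<epsilon> \<in> incident_edges E \<gamma>" for \<epsilon>
  proof -
    have e1: "\<epsilon> \<in> E" "\<epsilon> \<noteq> e" "\<epsilon> \<inter> {v, \<alpha>} \<noteq> {}" using that unfolding incident_edges_def pe by (simp_all add: \<gamma>_def)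
    have "\<alpha> \<notin> \<epsilon>" using leaf[of \<epsilon>] e1(1,2) by blast
    hence "v \<in> \<epsilon>" using e1(3) by blast
    have "(SOME u. u \<in> \<epsilon> \<and> u \<in> set \<gamma>) = v"
      by (rule some_equality) (use \<open>v \<in> \<epsilon>\<close> \<open>\<alpha> \<notin> \<epsilon>\<close> in \<open>auto simp: \<gamma>_def\<close>)
    hence "q_path q \<epsilon> \<gamma> = q \<epsilon> v" by (simp add: q_path_def)
    moreover have "gcd (q e v) (q \<epsilon> v) = 1" using Dg[rule_format, OF assms(4) assms(2) e1(1) _ \<open>v \<in> \<epsilon>\<close> e1(2)[symmetric]] assms(3) by simp
    ultimately show ?thesis by (simp add: coprime_iff_gcd_eq_1)
  qed
  have copP: "coprime (q e v) (\<Prod>\<epsilon>\<in>incident_edges E \<gamma>. q_path q \<epsilon> \<gamma>)"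
    using cop by (simp add: prod_coprime_right)
  have xa: "x_coef V A E f q v \<alpha> = f \<alpha> * (\<Prod>\<epsilon>\<in>incident_edges E \<gamma>. q_path q \<epsilon> \<gamma>)"
    unfolding x_coef_def Let_def gg by simp
  have "N_val V A E f q v = x_coef V A E f q v \<alpha> + (\<Sum>\<beta>\<in>?S - {\<alpha>}. x_coef V A E f q v \<beta>)"
    unfolding N_val_def using sum.remove[OF finS assms(5)] by simp
  hence "x_coef V A E f q v \<alpha> = - (\<Sum>\<beta>\<in>?S - {\<alpha>}. x_coef V A E f q v \<beta>)" using assms(6) by simp
  moreover have "q e v dvd (\<Sum>\<beta>\<in>?S - {\<alpha>}. x_coef V A E f q v \<beta>)" by (rule dvd_sum) (rule other)
  ultimately have "q e v dvd f \<alpha> * (\<Prod>\<epsilon>\<in>incident_edges E \<gamma>. q_path q \<epsilon> \<gamma>)" using xa by simp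
  then show ?thesis using copP by (simp add: coprime_dvd_mult_left_iff)
qed

end
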